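(* Let $\mathcal{A}\subseteq 2^P$ be a connected access structure and let $\mathcal M=(f,sP)$ be a polymatroid realizing $\mathcal{A}$ such that $f(a)=f(s)=1$ for all $a\in P$. Then $\mathcal M$ is a matroid, and it is uniquely determined by $\mathcal{A}$: any two polymatroids satisfying these hypotheses for the same $\mathcal{A}$ coincide.
   Context: A polymatroid $(f,M)$ consists of a finite set $M$ and a function $f$ on subsets of $M$ with $f(\emptyset)=0$ that is non-negative, monotone and submodular; a matroid is an integer-valued polymatroid whose singletons have rank $0$ or $1$. An access structure on a finite set $P$ is a non-empty upward-closed $\mathcal{A}\subseteq 2^P$ with $\emptyset\notin\mathcal{A}$; members are qualified. A participant $i\in P$ is important if there is $A\subseteq P$, $A\notin\mathcal{A}$, with $A\cup\{i\}\in\mathcal{A}$; $\mathcal{A}$ is connected if every participant is important. Let $s\notin P$; juxtaposition denotes union. A polymatroid $(f,sP)$ realizes $\mathcal{A}$ if for every $A\subseteq P$: $A\in\mathcal{A}$ iff $f(sA)=f(A)$, and $A\notin\mathcal{A}$ iff $f(sA)=f(A)+f(s)$. *)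

theory Defs
  imports Complex_Main
begin

definition polymatroid :: "('a set \<Rightarrow> real) \<Rightarrow> 'a set \<Rightarrow> bool" where
  "polymatroid f M \<longleftrightarrow> finite M \<and> f {} = 0
     \<and> (\<forall>X. X \<subseteq> M \<longrightarrow> 0 \<le> f X)
     \<and> (\<forall>X Y. X \<subseteq> Y \<and> Y \<subseteq> M \<longrightarrow> f X \<le> f Y)
     \<and> (\<forall>X Y. X \<subseteq> M \<and> Y \<subseteq> M \<longrightarrow> f (X \<union> Y) + f (X \<inter> Y) \<le> f X + f Y)"

definition matroid :: "('a set \<Rightarrow> real) \<Rightarrow> 'a set \<Rightarrow> bool" where
  "matroid f M \<longleftrightarrow> polymatroid f M
     \<and> (\<forall>X. X \<subseteq> M \<longrightarrow> f X \<in> \<int>)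
     \<and> (\<forall>x\<in>M. f {x} = 0 \<or> f {x} = 1)"

definition access_structure :: "'a set \<Rightarrow> 'a set set \<Rightarrow> bool" where
  "access_structure P \<A> \<longleftrightarrow> \<A> \<subseteq> Pow P \<and> \<A> \<noteq> {} \<and> {} \<notin> \<A>
     \<and> (\<forall>A B. A \<in> \<A> \<and> A \<subseteq> B \<and> B \<subseteq> P \<longrightarrow> B \<in> \<A>)"

definition important :: "'a set \<Rightarrow> 'a set set \<Rightarrow> 'a \<Rightarrow> bool" where
  "important P \<A> i \<longleftrightarrow> i \<in> P \<and> (\<exists>A. A \<subseteq> P \<and> A \<notin> \<A> \<and> insert i A \<in> \<A>)"

definition connected_access_structure :: "'a set \<Rightarrow> 'a set set \<Rightarrow> bool" where
  "connected_access_structure P \<A> \<longleftrightarrow> access_structure P \<A> \<and> (\<forall>i\<in>P. important P \<A> i)"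

definition realizes :: "('a set \<Rightarrow> real) \<Rightarrow> 'a \<Rightarrow> 'a set \<Rightarrow> 'a set set \<Rightarrow> bool" where
  "realizes f s P \<A> \<longleftrightarrow> (\<forall>A. A \<subseteq> P \<longrightarrow>
      (A \<in> \<A> \<longleftrightarrow> f (insert s A) = f A)
    \<and> (A \<notin> \<A> \<longleftrightarrow> f (insert s A) = f A + f {s}))"

end

theory Submission
  imports Defs
begin

lemma pm_mono: "polymatroid h M \<Longrightarrow> X \<subseteq> Y \<Longrightarrow> Y \<subseteq> M \<Longrightarrow> h X \<le> h Y"
  unfolding polymatroid_def by (elim conjE) (erule allE[of _ X], erule allE[of _ Y], simp)

lemma pm_sub: "polymatroid h M \<Longrightarrow> X \<subseteq> M \<Longrightarrow> Y \<subseteq> M \<Longrightarrow> h (X \<union> Y) + h (X \<inter> Y) \<le> h X + h Y"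
  unfolding polymatroid_def by (elim conjE) (erule allE[of _ X], erule allE[of _ Y], simp)

lemma pm_nonneg: "polymatroid h M \<Longrightarrow> X \<subseteq> M \<Longrightarrow> 0 \<le> h X"
  unfolding polymatroid_def by (elim conjE) (erule allE[of _ X], simp)

lemma pm_sub':
  "polymatroid h M \<Longrightarrow> X \<subseteq> M \<Longrightarrow> Y \<subseteq> M \<Longrightarrow> X \<union> Y = U \<Longrightarrow> X \<inter> Y = I \<Longrightarrow> h U + h I \<le> h X + h Y"
  using pm_sub[of h M X Y] by simp

lemma pm_unit:
  assumes "polymatroid h M" "X \<subseteq> M" "a \<in> M" "h {a} \<le> 1"
  shows "h (insert a X) \<le> h X + 1"
proof -
  have "h (X \<union> {a}) + h (X \<inter> {a}) \<le> h X + h {a}" using pm_sub[OF assms(1) assms(2), of "{a}"] assms(3) by simp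
  moreover have "0 \<le> h (X \<inter> {a})" using assms(1,2) pm_nonneg[of h M "X \<inter> {a}"] by auto
  ultimately show ?thesis using assms(4) by simp
qed

lemma real_in: "realizes h s P \<A> \<Longrightarrow> A \<subseteq> P \<Longrightarrow> A \<in> \<A> \<Longrightarrow> h (insert s A) = h A"
  unfolding realizes_def by (erule allE[of _ A]) simp

lemma real_out: "realizes h s P \<A> \<Longrightarrow> A \<subseteq> P \<Longrightarrow> A \<notin> \<A> \<Longrightarrow> h (insert s A) = h A + h {s}"
  unfolding realizes_def by (erule allE[of _ A]) auto

lemma witness:
  assumes pm: "polymatroid h (insert s P)" and re: "realizes h s P \<A>" and hs: "h {s} = 1"
    and hx: "h {x} \<le> 1" and sP: "s \<notin> P"
    and A: "A \<subseteq> P" "A \<notin> \<A>" "insert x A \<in> \<A>" "x \<in> P" "x \<notin> A"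
    and Y: "A \<subseteq> Y" "Y \<subseteq> P" "x \<notin> Y"
  shows "h (insert x Y) = h (insert s Y) \<and> h (insert s (insert x Y)) = h (insert s Y)"
proof -
  have 1: "h (insert s A) = h A + 1" using real_out[OF re A(1,2)] hs by simp
  have 2: "h (insert s (insert x A)) = h (insert x A)" using real_in[OF re _ A(3)] A by auto
  have 3: "h (insert x A) \<le> h A + 1" using pm_unit[OF pm, of A x] A hx by auto
  have 4: "h (insert s A) \<le> h (insert s (insert x A))" by (rule pm_mono[OF pm]) (use A in auto)
  have e1: "insert s Y \<union> insert s (insert x A) = insert s (insert x Y)" using Y by auto
  have e2: "insert s Y \<inter> insert s (insert x A) = insert s A" using Y sP A by auto
  have 5: "h (insert s (insert x Y)) + h (insert s A) \<le> h (insert s Y) + h (insert s (insert x A))"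
    by (rule pm_sub'[OF pm _ _ e1 e2]) (use Y A in auto)
  have e3: "insert x Y \<union> insert s (insert x A) = insert s (insert x Y)" using Y by auto
  have e4: "insert x Y \<inter> insert s (insert x A) = insert x A" using Y sP A by auto
  have 6: "h (insert s (insert x Y)) + h (insert x A) \<le> h (insert x Y) + h (insert s (insert x A))"
    by (rule pm_sub'[OF pm _ _ e3 e4]) (use Y A in auto)
  have 7: "h (insert s Y) \<le> h (insert s (insert x Y))" by (rule pm_mono[OF pm]) (use Y A in auto)
  have 8: "h (insert x Y) \<le> h (insert s (insert x Y))" by (rule pm_mono[OF pm]) (use Y A in auto)
  have 9: "h (insert s (insert x A)) = h (insert s A)" using 1 2 3 4 by linarith
  have 10: "h (insert x A) = h (insert s A)" using 1 2 3 4 by linarith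
  have 11: "h (insert s (insert x Y)) = h (insert s Y)" using 5 7 9 by linarith
  have 12: "h (insert s (insert x Y)) = h (insert x Y)" using 6 8 9 10 by linarith
  show ?thesis using 11 12 by simp
qed

lemma removal:
  assumes pm: "polymatroid h (insert s P)" and re: "realizes h s P \<A>" and hs: "h {s} = 1"
    and ha: "\<forall>a\<in>P. h {a} = 1" and sP: "s \<notin> P" and fin: "finite P"
    and T: "T \<subseteq> P" "T \<in> \<A>" and B: "B \<subseteq> T" "\<forall>z\<in>B. T - {z} \<notin> \<A>"
  shows "h (T - B) = h T - card B"
proof -
  have "finite B" using finite_subset[OF order_trans[OF B(1) T(1)] fin] .
  then show ?thesis using B
  proof (induction B rule: finite_induct)
    case empty
    then show ?case by simp
  next
    case (insert z B)
    have pr1: "insert z B \<subseteq> T" and pr2: "\<forall>z'\<in>insert z B. T - {z'} \<notin> \<A>"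
      using insert.prems by blast+
    have IH: "h (T - B) = h T - card B" by (rule insert.IH) (use pr1 pr2 in simp_all)
    have zT: "z \<in> T" using pr1 by simp
    have nq: "T - {z} \<notin> \<A>" using pr2 by simp
    have zP: "z \<in> P" using zT T(1) by blast
    have hzle: "h {z} \<le> 1" using ha zP by simp
    have ins: "insert z (T - {z}) = T" using zT by auto
    have w0: "h (insert z (T - {z})) = h (insert s (T - {z})) \<and> h (insert s (insert z (T - {z}))) = h (insert s (T - {z}))"
      by (rule witness[OF pm re hs hzle sP]) (use zT T nq ins in auto)
    then have w: "h (insert z (T - {z})) = h (insert s (T - {z}))" by (rule conjunct1)
    have ro: "h (insert s (T - {z})) = h (T - {z}) + h {s}" by (rule real_out[OF re _ nq]) (use T in auto)
    have hz: "h (T - {z}) = h T - 1"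
      using w ro hs unfolding ins by simp
    have e1: "(T - B) \<union> (T - {z}) = T" using insert.hyps(2) zT by blast
    have e2: "(T - B) \<inter> (T - {z}) = T - insert z B" by auto
    have s1: "h T + h (T - insert z B) \<le> h (T - B) + h (T - {z})"
      by (rule pm_sub'[OF pm _ _ e1 e2]) (use T in auto)
    have e3: "insert z (T - insert z B) = T - B" using insert.hyps(2) zT by blast
    have s2': "h (insert z (T - insert z B)) \<le> h (T - insert z B) + 1"
      by (rule pm_unit[OF pm _ _ hzle]) (use T zT in auto)
    have s2: "h (T - B) \<le> h (T - insert z B) + 1" using s2' unfolding e3 .
    have "card (insert z B) = card B + 1" using insert.hyps by simp
    then show ?case using IH hz s1 s2 by simp
  qed
qed

lemma min_qual:
  assumes "finite T" "T \<in> \<A>"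
  shows "\<exists>D\<subseteq>T. D \<in> \<A> \<and> (\<forall>y\<in>D. D - {y} \<notin> \<A>)"
  using assms
proof (induction "card T" arbitrary: T rule: less_induct)
  case less
  show ?case
  proof (cases "\<forall>y\<in>T. T - {y} \<notin> \<A>")
    case True
    show ?thesis by (rule exI[of _ T]) (use True less.prems in simp)
  next
    case False
    then obtain y where y: "y \<in> T" "T - {y} \<in> \<A>" by blast
    have c: "card (T - {y}) < card T" by (rule card_Diff1_less[OF less.prems(1) y(1)])
    have f: "finite (T - {y})" using less.prems(1) by simp
    obtain D where D: "D \<subseteq> T - {y}" "D \<in> \<A>" "\<forall>y\<in>D. D - {y} \<notin> \<A>"
      using less.hyps[OF c f y(2)] by blast
    show ?thesis by (rule exI[of _ D]) (use D in auto)
  qed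
qed

definition Hyp where
  "Hyp h s P \<A> \<longleftrightarrow> polymatroid h (insert s P) \<and> realizes h s P \<A> \<and> h {s} = 1 \<and> (\<forall>a\<in>P. h {a} = 1)"

lemma key:
  assumes fin: "finite P" and sP: "s \<notin> P" and con: "connected_access_structure P \<A>"
    and X: "X \<subseteq> P" "X \<noteq> {}"
  shows "\<exists>x\<in>X. \<exists>W. \<forall>h. Hyp h s P \<A> \<longrightarrow> h X = h (X - {x}) + (if W \<in> \<A> then 0 else 1)"
proof -
  have acc: "access_structure P \<A>" and imp: "\<forall>i\<in>P. important P \<A> i"
    using con unfolding connected_access_structure_def by auto
  have up0: "\<forall>A B. A \<in> \<A> \<and> A \<subseteq> B \<and> B \<subseteq> P \<longrightarrow> B \<in> \<A>"
    using acc unfolding access_structure_def by (elim conjE)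
  have up: "\<And>A B. A \<in> \<A> \<Longrightarrow> A \<subseteq> B \<Longrightarrow> B \<subseteq> P \<Longrightarrow> B \<in> \<A>"
    using up0 by blast
  define \<D> where "\<D> = {(D,y). D \<subseteq> P \<and> D \<in> \<A> \<and> y \<in> D \<and> y \<in> X \<and> D - {y} \<notin> \<A>}"
  obtain x0 where x0: "x0 \<in> X" using X by blast
  have x0P: "x0 \<in> P" using x0 X by blast
  have "important P \<A> x0" using imp x0P by blast
  then obtain A0 where A0: "A0 \<subseteq> P" "A0 \<notin> \<A>" "insert x0 A0 \<in> \<A>"
    unfolding important_def by blast
  have "x0 \<notin> A0" using A0 by (metis insert_absorb)
  then have mem: "(insert x0 A0, x0) \<in> \<D>" using A0 x0 x0P unfolding \<D>_def by auto
  obtain p where p: "p \<in> \<D>" and pmin: "\<forall>q. q \<in> \<D> \<longrightarrow> card (fst p - X) \<le> card (fst q - X)"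
    using ex_has_least_nat[of "\<lambda>q. q \<in> \<D>" "(insert x0 A0, x0)" "\<lambda>q. card (fst q - X)"] mem by blast
  obtain D x where pDx: "p = (D, x)" by (cases p)
  have D: "D \<subseteq> P" "D \<in> \<A>" "x \<in> D" "x \<in> X" "D - {x} \<notin> \<A>" using p pDx unfolding \<D>_def by auto
  have minD: "card (D - X) \<le> card (D' - X)" if "(D', y) \<in> \<D>" for D' y
  proof -
    have "card (fst p - X) \<le> card (fst (D', y) - X)" using pmin that by blast
    then show ?thesis using pDx by simp
  qed
  define Z where "Z = D - X"
  define W where "W = (X - {x}) \<union> Z"
  have ZP: "Z \<subseteq> P" using D(1) unfolding Z_def by blast
  have finZ: "finite Z" using finite_subset[OF ZP fin] .
  have ZX: "Z \<inter> X = {}" unfolding Z_def by blast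
  have F1: "T \<notin> \<A>" if z: "z \<in> Z" and T: "T \<subseteq> X \<union> Z" "z \<notin> T" for z T
  proof
    assume TA: "T \<in> \<A>"
    have TP: "T \<subseteq> P" using T(1) X(1) ZP by blast
    have finT: "finite T" using finite_subset[OF TP fin] .
    obtain D' where D': "D' \<subseteq> T" "D' \<in> \<A>" "\<forall>y\<in>D'. D' - {y} \<notin> \<A>"
      using min_qual[OF finT TA] by blast
    show False
    proof (cases "D' \<inter> X = {}")
      case False
      then obtain y where y: "y \<in> D'" "y \<in> X" by blast
      have "D' \<subseteq> P" using D'(1) TP by blast
      then have "(D', y) \<in> \<D>" using D' y unfolding \<D>_def by blast
      then have c1: "card (D - X) \<le> card (D' - X)" by (rule minD)
      have sub: "D' - X \<subseteq> Z - {z}" using D'(1) T by blast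
      have "card (D' - X) \<le> card (Z - {z})" by (rule card_mono) (use finZ sub in auto)
      also have "\<dots> < card Z" by (rule card_Diff1_less[OF finZ z])
      finally show False using c1 unfolding Z_def by simp
    next
      case True
      have sub: "D' \<subseteq> D - {x}" using D'(1) T(1) True D(4) unfolding Z_def by blast
      have "D - {x} \<subseteq> P" using D(1) by blast
      then have "D - {x} \<in> \<A>" using up[OF D'(2) sub] by blast
      then show False using D(5) by simp
    qed
  qed
  have xP: "x \<in> P" using D(1,3) by blast
  have WP: "W \<subseteq> P" using X(1) ZP unfolding W_def by blast
  have xW: "x \<notin> W" using ZX D(4) unfolding W_def by blast
  have insD: "insert x (D - {x}) = D" using D(3) by blast
  have insW: "insert x W = X \<union> Z" using D(4) unfolding W_def by blast
  have DxW: "D - {x} \<subseteq> W" unfolding W_def Z_def by blast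
  have XZ: "X \<union> Z \<subseteq> P" using X(1) ZP by blast
  have DXZ: "D \<subseteq> X \<union> Z" unfolding Z_def by blast
  have XZA: "X \<union> Z \<in> \<A>" using up[OF D(2) DXZ XZ] .
  have XZd: "(X \<union> Z) - Z = X" using ZX by blast
  have WZd: "W - Z = X - {x}" using ZX unfolding W_def by blast
  have ZXZ: "Z \<subseteq> X \<union> Z" by blast
  have ZW: "Z \<subseteq> W" unfolding W_def by blast
  have nqXZ: "\<forall>z\<in>Z. (X \<union> Z) - {z} \<notin> \<A>"
  proof
    fix z assume "z \<in> Z" then show "(X \<union> Z) - {z} \<notin> \<A>" by (rule F1) blast+
  qed
  have nqW: "\<forall>z\<in>Z. W - {z} \<notin> \<A>"
  proof
    fix z assume "z \<in> Z" then show "W - {z} \<notin> \<A>" by (rule F1) (unfold W_def, blast+)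
  qed
  have e1: "X \<union> W = X \<union> Z" using D(4) unfolding W_def by blast
  have e2: "X \<inter> W = X - {x}" using ZX unfolding W_def by blast
  have insX: "insert x (X - {x}) = X" using D(4) by blast
  have main: "\<forall>h. Hyp h s P \<A> \<longrightarrow> h X = h (X - {x}) + (if W \<in> \<A> then 0 else 1)"
  proof (intro allI impI)
    fix h assume H: "Hyp h s P \<A>"
    have pm: "polymatroid h (insert s P)" and re: "realizes h s P \<A>" and hs: "h {s} = 1"
      and ha: "\<forall>a\<in>P. h {a} = 1" using H unfolding Hyp_def by auto
    have hxle: "h {x} \<le> 1" using ha xP by simp
    have w0: "h (insert x W) = h (insert s W) \<and> h (insert s (insert x W)) = h (insert s W)"
      by (rule witness[OF pm re hs hxle sP]) (use D xP WP xW DxW insD in auto)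
    have s1: "h (X \<union> Z) = h (insert s W)" using w0 unfolding insW by simp
    have r1: "h ((X \<union> Z) - Z) = h (X \<union> Z) - card Z"
      by (rule removal[OF pm re hs ha sP fin XZ XZA ZXZ nqXZ])
    have s2: "h X = h (X \<union> Z) - card Z" using r1 unfolding XZd .
    show "h X = h (X - {x}) + (if W \<in> \<A> then 0 else 1)"
    proof (cases "W \<in> \<A>")
      case True
      have a: "h (insert s W) = h W" by (rule real_in[OF re WP True])
      have r2: "h (W - Z) = h W - card Z"
        by (rule removal[OF pm re hs ha sP fin WP True ZW nqW])
      have b: "h (X - {x}) = h W - card Z" using r2 unfolding WZd .
      show ?thesis using a b s1 s2 True by simp
    next
      case False
      have a: "h (insert s W) = h W + 1" using real_out[OF re WP False] hs by simp
      have b: "h (X \<union> Z) + h (X - {x}) \<le> h X + h W"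
        by (rule pm_sub'[OF pm _ _ e1 e2]) (use X(1) WP in auto)
      have c0: "h (insert x (X - {x})) \<le> h (X - {x}) + 1"
        by (rule pm_unit[OF pm _ _ hxle]) (use X(1) xP in auto)
      have c: "h X \<le> h (X - {x}) + 1" using c0 unfolding insX .
      show ?thesis using a b c s1 False by simp
    qed
  qed
  show ?thesis using main D(4) by blast
qed

theorem theorem3p4:
  fixes P :: "'a set" and s :: 'a and \<A> :: "'a set set" and f :: "'a set \<Rightarrow> real"
  assumes "finite P" and "s \<notin> P"
    and "connected_access_structure P \<A>"
    and "polymatroid f (insert s P)" and "realizes f s P \<A>"
    and "f {s} = 1" and "\<forall>a\<in>P. f {a} = 1"
  shows "matroid f (insert s P)
    \<and> (\<forall>g :: 'a set \<Rightarrow> real. polymatroid g (insert s P) \<and> realizes g s P \<A>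
          \<and> g {s} = 1 \<and> (\<forall>a\<in>P. g {a} = 1)
          \<longrightarrow> (\<forall>X. X \<subseteq> insert s P \<longrightarrow> g X = f X))"
proof -
  have Hf: "Hyp f s P \<A>" using assms(4-7) unfolding Hyp_def by blast
  have rec: "h (insert s X) = h X + (if X \<in> \<A> then 0 else 1)" if H: "Hyp h s P \<A>" and XP: "X \<subseteq> P" for h X
  proof -
    have re: "realizes h s P \<A>" and hs: "h {s} = 1" using H unfolding Hyp_def by auto
    show ?thesis
    proof (cases "X \<in> \<A>")
      case True then show ?thesis using real_in[OF re XP True] by simp
    next
      case False then show ?thesis using real_out[OF re XP False] hs by simp
    qed
  qed
  have main: "f X \<in> \<int> \<and> (\<forall>g. Hyp g s P \<A> \<longrightarrow> g X = f X)" if "card X = n" "X \<subseteq> insert s P" for n X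
    using that
  proof (induction n arbitrary: X rule: less_induct)
    case (less n)
    have cX: "card X = n" and XQ: "X \<subseteq> insert s P" using less.prems by auto
    have finX: "finite X" using finite_subset[OF XQ] assms(1) by simp
    consider "X = {}" | "s \<in> X" | "X \<noteq> {}" "s \<notin> X" by blast
    then show ?case
    proof cases
      case 1
      have "\<forall>g. Hyp g s P \<A> \<longrightarrow> g {} = 0" unfolding Hyp_def polymatroid_def by blast
      moreover have "f {} = 0" using assms(4) unfolding polymatroid_def by blast
      ultimately show ?thesis using 1 by simp
    next
      case 2
      define X0 where "X0 = X - {s}"
      have X0P: "X0 \<subseteq> P" using XQ unfolding X0_def by blast
      have c: "card X0 < n" using card_Diff1_less[OF finX 2] cX unfolding X0_def by simp
      have X0Q: "X0 \<subseteq> insert s P" using X0P by blast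
      have IH: "f X0 \<in> \<int> \<and> (\<forall>g. Hyp g s P \<A> \<longrightarrow> g X0 = f X0)"
        by (rule less.IH[OF c refl X0Q])
      have XX: "X = insert s X0" using 2 unfolding X0_def by blast
      have fX: "f X = f X0 + (if X0 \<in> \<A> then 0 else 1)" using rec[OF Hf X0P] XX by simp
      have gX: "\<forall>g. Hyp g s P \<A> \<longrightarrow> g X = g X0 + (if X0 \<in> \<A> then 0 else 1)"
        using rec[OF _ X0P] XX by simp
      have "f X \<in> \<int>" using IH fX by simp
      moreover have "\<forall>g. Hyp g s P \<A> \<longrightarrow> g X = f X" using IH fX gX by simp
      ultimately show ?thesis by blast
    next
      case 3
      have XP: "X \<subseteq> P" using XQ 3(2) by blast
      obtain x W where x: "x \<in> X" and W: "\<forall>h. Hyp h s P \<A> \<longrightarrow> h X = h (X - {x}) + (if W \<in> \<A> then 0 else 1)"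
        using key[OF assms(1,2,3) XP 3(1)] by blast
      have c: "card (X - {x}) < n" using card_Diff1_less[OF finX x] cX by simp
      have XxQ: "X - {x} \<subseteq> insert s P" using XQ by blast
      have IH: "f (X - {x}) \<in> \<int> \<and> (\<forall>g. Hyp g s P \<A> \<longrightarrow> g (X - {x}) = f (X - {x}))"
        by (rule less.IH[OF c refl XxQ])
      have fX: "f X = f (X - {x}) + (if W \<in> \<A> then 0 else 1)" using W Hf by blast
      have "f X \<in> \<int>" using IH fX by simp
      moreover have "\<forall>g. Hyp g s P \<A> \<longrightarrow> g X = f X" using IH fX W by simp
      ultimately show ?thesis by blast
    qed
  qed
  have ints: "\<forall>X. X \<subseteq> insert s P \<longrightarrow> f X \<in> \<int>" using main by blast
  have sing: "\<forall>x\<in>insert s P. f {x} = 0 \<or> f {x} = 1" using assms(6,7) by blast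
  have "matroid f (insert s P)"
    unfolding matroid_def using assms(4) ints sing by blast
  moreover have "\<forall>g :: 'a set \<Rightarrow> real. polymatroid g (insert s P) \<and> realizes g s P \<A>
          \<and> g {s} = 1 \<and> (\<forall>a\<in>P. g {a} = 1)
          \<longrightarrow> (\<forall>X. X \<subseteq> insert s P \<longrightarrow> g X = f X)"
  proof (intro allI impI)
    fix g :: "'a set \<Rightarrow> real" and X
    assume "polymatroid g (insert s P) \<and> realizes g s P \<A> \<and> g {s} = 1 \<and> (\<forall>a\<in>P. g {a} = 1)"
      and "X \<subseteq> insert s P"
    then show "g X = f X" using main[OF refl, of X] unfolding Hyp_def by blast
  qed
  ultimately show ?thesis by blast
qed

end
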